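(* Let $\mathcal B\subset\mathbb N_{\geq2}$ be finite with $2\in\mathcal B$, let $t\in\mathcal B\setminus\{2\}$, let $p\geq2$ be an integer, and let $W\subset\mathcal B^{p}$ be a non-empty finite set of words of length $p$ none of whose last letter equals $2$. Let $(m(i))_{i\geq0}$ be positive integers and put $M_k=p\sum_{i=0}^k m(i)$; assume $M_k\geq\max\{\sum_{i=0}^{k-1}M_i,\ M_{k-1}/2\}$ for all $k\geq1$. Let $\lambda>0$, put $L=\max\{\max\mathcal B-2,\ p\}$, and let $\alpha\in(2,\infty)$ satisfy \[2(\alpha-2)\log\big(\sqrt2(L+1)\big)+(\alpha-2)\lambda\leq\frac{\lambda}{2}.\] Let $y\in(0,1)\setminus\mathbb Q$ be such that its BCF digit sequence $(b_n(y))_{n\geq1}$ is an infinite concatenation of words from $W$. Let $x(y)\in(0,1)\setminus\mathbb Q$ be the number whose BCF digit sequence is obtained from $(b_n(y))_{n\geq1}$ by inserting, for every $k\geq0$, immediately after the digit $b_{M_k}(y)$, a block consisting of $\lfloor\exp(\lambda M_k)\rfloor$ copies of $2$ followed by a single digit $t$ (with all other digits of $y$ kept in order). Then $x(y)\in G(\alpha)\cap F_{\mathcal B}$.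
   Context: For $x\in\mathbb R$, the irrationality exponent $\mu(x)$ is the supremum of the set of $\mu\in\mathbb R$ such that $|x-p/q|<q^{-\mu}$ holds for infinitely many $(p,q)\in\mathbb Z\times\mathbb N$ with $|p|$ and $q$ coprime. For $\alpha>2$, $G(\alpha)=\{x\in\mathbb R\setminus\mathbb Q:\mu(x)\geq\alpha\}$. Every irrational $x$ has a unique backward continued fraction (BCF) expansion $x=b_0(x)-\cfrac{1}{b_1(x)-\cfrac{1}{b_2(x)-\cdots}}$ with $b_0(x)=\lfloor x\rfloor+1$ and integers $b_n(x)\geq2$ for $n\geq1$; conversely every sequence of integers $\geq2$ is the BCF digit sequence of a unique number in $(0,1)\setminus\mathbb Q$ (with $b_0=1$). For a finite $\mathcal B\subset\mathbb N_{\geq2}$, $F_{\mathcal B}=\{x\in(0,1)\setminus\mathbb Q: b_n(x)\in\mathcal B\text{ for all }n\geq1\}$. *)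

theory Defs
  imports Complex_Main "HOL-Library.Extended_Real"
begin

definition irr_exp :: "real \<Rightarrow> ereal" where
  "irr_exp x = Sup {ereal mu | mu. infinite {(p::int, q::nat). q > 0 \<and> coprime p (int q) \<and>
       \<bar>x - real_of_int p / real q\<bar> < real q powr (- mu)}}"

definition G :: "real \<Rightarrow> real set" where
  "G alpha = {x. x \<notin> \<rat> \<and> irr_exp x \<ge> ereal alpha}"

text \<open>Backward continued fraction: x = b0 - 1/x1, b0 = floor x + 1, x1 = 1/(b0 - x), etc.\<close>
fun bcf_orbit :: "real \<Rightarrow> nat \<Rightarrow> real" where
  "bcf_orbit x 0 = x"
| "bcf_orbit x (Suc n) = 1 / (real_of_int (\<lfloor>bcf_orbit x n\<rfloor> + 1) - bcf_orbit x n)"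

definition bcf_digit :: "real \<Rightarrow> nat \<Rightarrow> int" where
  "bcf_digit x n = \<lfloor>bcf_orbit x n\<rfloor> + 1"

definition bcf_value :: "(nat \<Rightarrow> int) \<Rightarrow> real" where
  "bcf_value c = (THE x. x \<in> {0<..<1} - \<rat> \<and> (\<forall>n\<ge>1. bcf_digit x n = c n))"

definition F :: "nat set \<Rightarrow> real set" where
  "F B = {x \<in> {0<..<1} - \<rat>. \<forall>n\<ge>1. bcf_digit x n \<in> int ` B}"

definition conc_nth :: "(nat \<Rightarrow> 'a list) \<Rightarrow> nat \<Rightarrow> 'a" where
  "conc_nth seg n = (let k = (LEAST k. n < (\<Sum>i\<le>k. length (seg i)))
                     in seg k ! (n - (\<Sum>i<k. length (seg i))))"

end

theory Submission
  imports Defs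
begin

lemma orbit_props:
  assumes x: "x \<in> {0<..<1} - \<rat>"
  shows "bcf_orbit x n \<notin> \<rat>"
    and "bcf_orbit x n = of_int (bcf_digit x n) - 1 / bcf_orbit x (Suc n)"
    and "n \<ge> 1 \<Longrightarrow> bcf_orbit x n > 1"
proof -
  have irr: "bcf_orbit x n \<notin> \<rat>" for n
  proof (induction n)
    case 0 then show ?case using x by simp
  next
    case (Suc n)
    show ?case
    proof
      assume "bcf_orbit x (Suc n) \<in> \<rat>"
      then have "1 / bcf_orbit x (Suc n) \<in> \<rat>" by (intro Rats_divide) auto
      moreover have "1 / bcf_orbit x (Suc n) = real_of_int (\<lfloor>bcf_orbit x n\<rfloor> + 1) - bcf_orbit x n"
        by (simp del: bcf_orbit.simps add: bcf_orbit.simps(2))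
      ultimately have "real_of_int (\<lfloor>bcf_orbit x n\<rfloor> + 1) - bcf_orbit x n \<in> \<rat>" by simp
      from Rats_diff[OF Rats_of_int[of "\<lfloor>bcf_orbit x n\<rfloor> + 1"] this]
      show False using Suc by simp
    qed
  qed
  show "bcf_orbit x n \<notin> \<rat>" by (rule irr)
  have pos: "real_of_int (\<lfloor>bcf_orbit x n\<rfloor> + 1) - bcf_orbit x n > 0" for n
    by linarith
  have lt1: "real_of_int (\<lfloor>bcf_orbit x n\<rfloor> + 1) - bcf_orbit x n < 1" for n
  proof -
    have "bcf_orbit x n \<noteq> of_int \<lfloor>bcf_orbit x n\<rfloor>" using irr[of n] by (metis Rats_of_int)
    then have "of_int \<lfloor>bcf_orbit x n\<rfloor> < bcf_orbit x n" using of_int_floor_le[of "bcf_orbit x n"] by linarith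
    then show ?thesis by simp
  qed
  show "bcf_orbit x n = of_int (bcf_digit x n) - 1 / bcf_orbit x (Suc n)"
    using pos[of n] by (simp add: bcf_digit_def)
  show "n \<ge> 1 \<Longrightarrow> bcf_orbit x n > 1"
  proof -
    assume "n \<ge> 1"
    then obtain k where k: "n = Suc k" by (cases n) auto
    show ?thesis using pos[of k] lt1[of k] unfolding k by (simp add: field_simps)
  qed
qed

lemma orbit_digit0:
  assumes x: "x \<in> {0<..<1} - \<rat>"
  shows "bcf_digit x 0 = 1"
proof -
  have "\<lfloor>x\<rfloor> = 0" using x by (simp add: floor_eq_iff)
  then show ?thesis by (simp add: bcf_digit_def)
qed

lemma orbit_digit_ge2:
  assumes x: "x \<in> {0<..<1} - \<rat>" and n: "n \<ge> 1"
  shows "bcf_digit x n \<ge> 2"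
  using orbit_props(3)[OF x n] by (simp add: bcf_digit_def)

lemma tail_unique:
  fixes d :: "nat \<Rightarrow> int" and v w :: "nat \<Rightarrow> real"
  assumes d2: "\<forall>n. d n \<ge> 2" and d3: "\<forall>N. \<exists>m\<ge>N. d m \<ge> 3"
    and v: "\<forall>n. v n > 1 \<and> v n = d n - 1 / v (Suc n)"
    and w: "\<forall>n. w n > 1 \<and> w n = d n - 1 / w (Suc n)"
  shows "v 0 = w 0"
proof -
  have ne: "\<bar>v n - w n\<bar> \<le> \<bar>v (Suc n) - w (Suc n)\<bar>" for n
  proof -
    have a: "v (Suc n) > 1" "w (Suc n) > 1" using v w by blast+
    have "v n - w n = 1 / w (Suc n) - 1 / v (Suc n)" proof -
      have "v n = d n - 1 / v (Suc n)" "w n = d n - 1 / w (Suc n)" using v w by blast+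
      then show ?thesis by linarith
    qed
    also have "\<dots> = (v (Suc n) - w (Suc n)) / (v (Suc n) * w (Suc n))" using a by (simp add: field_simps)
    finally have "\<bar>v n - w n\<bar> = \<bar>v (Suc n) - w (Suc n)\<bar> / (v (Suc n) * w (Suc n))" using a by simp
    also have "\<dots> \<le> \<bar>v (Suc n) - w (Suc n)\<bar>"
    proof -
      have "1 \<le> v (Suc n) * w (Suc n)" using a mult_mono[of 1 "v (Suc n)" 1 "w (Suc n)"] by simp
      then show ?thesis by (simp add: divide_le_eq mult_le_cancel_left1)
    qed
    finally show ?thesis .
  qed
  have ct: "\<bar>v n - w n\<bar> \<le> \<bar>v (Suc n) - w (Suc n)\<bar> / 4" if d3n: "d (Suc n) \<ge> 3" for n
  proof -
    have a: "v (Suc n) > 2" "w (Suc n) > 2"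
    proof -
      have "v (Suc (Suc n)) > 1" "w (Suc (Suc n)) > 1" using v w by blast+
      then have "1 / v (Suc (Suc n)) < 1" "1 / w (Suc (Suc n)) < 1" by simp_all
      moreover have "real_of_int (d (Suc n)) \<ge> 3" using d3n by simp
      moreover have "v (Suc n) = d (Suc n) - 1 / v (Suc (Suc n))" "w (Suc n) = d (Suc n) - 1 / w (Suc (Suc n))" using v w by blast+
      ultimately show "v (Suc n) > 2" "w (Suc n) > 2" by linarith+
    qed
    have "v n - w n = 1 / w (Suc n) - 1 / v (Suc n)" proof -
      have "v n = d n - 1 / v (Suc n)" "w n = d n - 1 / w (Suc n)" using v w by blast+
      then show ?thesis by linarith
    qed
    also have "\<dots> = (v (Suc n) - w (Suc n)) / (v (Suc n) * w (Suc n))" using a by (simp add: field_simps)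
    finally have "\<bar>v n - w n\<bar> = \<bar>v (Suc n) - w (Suc n)\<bar> / (v (Suc n) * w (Suc n))" using a by simp
    also have "\<dots> \<le> \<bar>v (Suc n) - w (Suc n)\<bar> / 4"
    proof -
      have "4 \<le> v (Suc n) * w (Suc n)" using a mult_mono[of 2 "v (Suc n)" 2 "w (Suc n)"] by simp
      then show ?thesis by (intro divide_left_mono) auto
    qed
    finally show ?thesis .
  qed
  have nek: "\<bar>v n - w n\<bar> \<le> \<bar>v (n + k) - w (n + k)\<bar>" for n k
  proof (induction k)
    case 0 then show ?case by simp
  next
    case (Suc k) then show ?case using ne[of "n + k"] by simp
  qed
  have b1: "\<bar>v n - w n\<bar> \<le> 1" for n
  proof -
    have "v (Suc n) > 1" "w (Suc n) > 1" using v w by blast+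
    then have "0 < 1 / v (Suc n)" "1 / v (Suc n) < 1" "0 < 1 / w (Suc n)" "1 / w (Suc n) < 1" by simp_all
    moreover have "v n = d n - 1 / v (Suc n)" "w n = d n - 1 / w (Suc n)" using v w by blast+
    ultimately show ?thesis by linarith
  qed
  have main: "\<bar>v n - w n\<bar> \<le> (1/4) ^ j" for j n
  proof (induction j arbitrary: n)
    case 0 then show ?case using b1 by simp
  next
    case (Suc j)
    obtain m where m: "m \<ge> Suc n" "d m \<ge> 3" using d3 by blast
    then obtain m' where m': "m = Suc m'" "m' \<ge> n" by (cases m) auto
    have "\<bar>v n - w n\<bar> \<le> \<bar>v m' - w m'\<bar>" using nek[of n "m' - n"] m' by simp
    also have "\<dots> \<le> \<bar>v m - w m\<bar> / 4" using ct[of m'] m m' by simp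
    also have "\<dots> \<le> (1/4) ^ j / 4" using Suc[of m] by simp
    finally show ?case by simp
  qed
  show ?thesis
  proof (rule ccontr)
    assume "v 0 \<noteq> w 0"
    then have "\<bar>v 0 - w 0\<bar> > 0" by simp
    then obtain j where "(1/4::real) ^ j < \<bar>v 0 - w 0\<bar>" using real_arch_pow_inv[of "\<bar>v 0 - w 0\<bar>" "1/4"] by auto
    then show False using main[of 0 j] by simp
  qed
qed

fun gtail :: "(nat \<Rightarrow> int) \<Rightarrow> nat \<Rightarrow> nat \<Rightarrow> real" where
  "gtail d n 0 = 1"
| "gtail d n (Suc N) = d n - 1 / gtail d (Suc n) N"

lemma gtail_ge1: assumes "\<forall>n. d n \<ge> 2" shows "gtail d n N \<ge> 1"
proof (induction N arbitrary: n)
  case 0 then show ?case by simp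
next
  case (Suc N)
  have "1 / gtail d (Suc n) N \<le> 1" using Suc[of "Suc n"] by simp
  moreover have "real_of_int (d n) \<ge> 2" using assms[rule_format, of n] by simp
  ultimately show ?case by simp
qed

lemma gtail_le: assumes "\<forall>n. d n \<ge> 2" shows "gtail d n N \<le> d n"
proof (cases N)
  case 0 then show ?thesis using assms[rule_format, of n] by simp
next
  case (Suc N')
  have "gtail d (Suc n) N' \<ge> 1" using gtail_ge1[OF assms] by blast
  then show ?thesis using Suc by simp
qed

lemma gtail_mono: assumes "\<forall>n. d n \<ge> 2" shows "gtail d n N \<le> gtail d n (Suc N)"
proof (induction N arbitrary: n)
  case 0
  have "real_of_int (d n) \<ge> 2" using assms[rule_format, of n] by simp
  then show ?case by simp
next
  case (Suc N)
  have a: "gtail d (Suc n) N \<ge> 1" using gtail_ge1[OF assms] by blast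
  have "1 / gtail d (Suc n) (Suc N) \<le> 1 / gtail d (Suc n) N"
    using Suc[of "Suc n"] a by (intro divide_left_mono) auto
  then show ?case by simp
qed

lemma tail_exists:
  fixes d :: "nat \<Rightarrow> int"
  assumes d2: "\<forall>n. d n \<ge> 2"
  shows "\<exists>w. \<forall>n. w n \<ge> 1 \<and> w n = d n - 1 / w (Suc n)"
proof -
  have "\<forall>n. \<exists>l. (\<lambda>N. gtail d n N) \<longlonglongrightarrow> l"
  proof
    fix n
    have "incseq (\<lambda>N. gtail d n N)" by (intro incseq_SucI) (rule gtail_mono[OF d2])
    moreover have "\<forall>i. gtail d n i \<le> d n" using gtail_le[OF d2] by blast
    ultimately obtain L where "(\<lambda>N. gtail d n N) \<longlonglongrightarrow> L" by (rule incseq_convergent)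
    then show "\<exists>l. (\<lambda>N. gtail d n N) \<longlonglongrightarrow> l" by blast
  qed
  from choice[OF this] obtain w where w: "\<And>n. (\<lambda>N. gtail d n N) \<longlonglongrightarrow> w n" by blast
  have ge: "w n \<ge> 1" for n
  proof -
    have "\<exists>N. \<forall>k\<ge>N. 1 \<le> gtail d n k" using gtail_ge1[OF d2] by blast
    from LIMSEQ_le_const[OF w[of n] this] show ?thesis .
  qed
  have "w n = d n - 1 / w (Suc n)" for n
  proof -
    have "(\<lambda>N. gtail d n (Suc N)) \<longlonglongrightarrow> w n" using w[of n] by (rule LIMSEQ_Suc)
    moreover have "(\<lambda>N. gtail d n (Suc N)) \<longlonglongrightarrow> d n - 1 / w (Suc n)"
    proof -
      have "w (Suc n) \<noteq> 0" using ge[of "Suc n"] by simp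
      from tendsto_diff[OF tendsto_const tendsto_divide[OF tendsto_const w[of "Suc n"] this]]
      show ?thesis by (simp only: gtail.simps)
    qed
    ultimately show ?thesis using LIMSEQ_unique by blast
  qed
  then show ?thesis using ge by blast
qed

lemma tail_gt1:
  fixes d :: "nat \<Rightarrow> int"
  assumes d2: "\<forall>n. d n \<ge> 2" and d3: "\<forall>N. \<exists>m\<ge>N. d m \<ge> 3"
    and w: "\<forall>n. w n \<ge> 1 \<and> w n = d n - 1 / w (Suc n)"
  shows "w n > 1"
proof -
  obtain m where m: "m \<ge> n" "d m \<ge> 3" using d3 by blast
  have wm: "w m > 1"
  proof -
    have "w (Suc m) \<ge> 1" using w by blast
    then have "1 / w (Suc m) \<le> 1" by simp
    moreover have "real_of_int (d m) \<ge> 3" using m by simp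
    moreover have "w m = d m - 1 / w (Suc m)" using w by blast
    ultimately show ?thesis by linarith
  qed
  have step: "w (Suc k) > 1 \<Longrightarrow> w k > 1" for k
  proof -
    assume "w (Suc k) > 1"
    then have "1 / w (Suc k) < 1" by simp
    moreover have "real_of_int (d k) \<ge> 2" using d2[rule_format, of k] by simp
    moreover have "w k = d k - 1 / w (Suc k)" using w by blast
    ultimately show ?thesis by linarith
  qed
  have "w (m - j) > 1" for j
  proof (induction j)
    case 0 then show ?case using wm by simp
  next
    case (Suc j)
    show ?case
    proof (cases "j < m")
      case True
      then have "Suc (m - Suc j) = m - j" by simp
      then show ?thesis using step[of "m - Suc j"] Suc by simp
    next
      case False then show ?thesis using Suc by simp
    qed
  qed
  from this[of "m - n"] show ?thesis using m by simp
qed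

lemma tail_irrational:
  fixes d :: "nat \<Rightarrow> int"
  assumes w: "\<forall>n. w n > 1 \<and> w n = d n - 1 / w (Suc n)"
  shows "w 0 \<notin> \<rat>"
proof
  assume "w 0 \<in> \<rat>"
  then obtain a b :: int where ab: "b > 0" "w 0 = a / b" by (metis Rats_cases')
  have "\<exists>(a'::int) (b'::int). 0 < b' \<and> b' + int n \<le> b \<and> w n = a' / b'" for n
  proof (induction n)
    case 0 then show ?case using ab by auto
  next
    case (Suc n)
    then obtain a' b' :: int where h: "0 < b'" "b' + int n \<le> b" "w n = a' / b'" by blast
    define e where "e = d n * b' - a'"
    have inv: "1 / w (Suc n) = d n - w n"
    proof -
      have "w n = d n - 1 / w (Suc n)" using w by blast
      then show ?thesis by linarith
    qed
    have w1: "w (Suc n) > 1" using w by blast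
    have re: "real_of_int e = b' * (d n - w n)" using h by (simp add: e_def field_simps)
    have "0 < d n - w n" "d n - w n < 1" proof -
      have "0 < 1 / w (Suc n)" "1 / w (Suc n) < 1" using w1 by simp_all
      then show "0 < d n - w n" "d n - w n < 1" using inv by linarith+
    qed
    then have "0 < real_of_int e" "real_of_int e < b'" using re h(1) by (simp_all add: mult_less_cancel_left1)
    then have e: "0 < e" "e < b'" by simp_all
    have "w (Suc n) = 1 / (d n - w n)" using inv by (metis divide_divide_eq_right div_by_1 mult_1)
    also have "\<dots> = b' / e"
    proof -
      have "d n - w n = e / b'" using re h(1) by (simp add: field_simps)
      then show ?thesis by simp
    qed
    finally have "w (Suc n) = b' / e" .
    then show ?case using e h by (intro exI[of _ b'] exI[of _ e]) auto
  qed
  from this[of "nat b"] show False using ab by auto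
qed

lemma bcf_value_prop:
  fixes c :: "nat \<Rightarrow> int"
  assumes c2: "\<forall>n\<ge>1. c n \<ge> 2" and c3: "\<forall>N. \<exists>m\<ge>N. c m \<ge> 3"
  shows "bcf_value c \<in> {0<..<1} - \<rat> \<and> (\<forall>n\<ge>1. bcf_digit (bcf_value c) n = c n)"
proof -
  define d where "d n = c (Suc n)" for n
  have d2: "\<forall>n. d n \<ge> 2" using c2 by (simp add: d_def)
  have d3: "\<forall>N. \<exists>m\<ge>N. d m \<ge> 3"
  proof
    fix N
    obtain m where m: "m \<ge> Suc N" "c m \<ge> 3" using c3 by blast
    then obtain m' where "m = Suc m'" by (cases m) auto
    then show "\<exists>m\<ge>N. d m \<ge> 3" using m by (intro exI[of _ m']) (auto simp: d_def)
  qed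
  obtain w where w: "\<forall>n. w n \<ge> 1 \<and> w n = d n - 1 / w (Suc n)" using tail_exists[OF d2] by blast
  have wgt: "w n > 1" for n by (rule tail_gt1[OF d2 d3 w])
  have weq: "w n = d n - 1 / w (Suc n)" for n using w by blast
  have w': "\<forall>n. w n > 1 \<and> w n = d n - 1 / w (Suc n)" using wgt weq by blast
  have wirr: "w 0 \<notin> \<rat>" by (rule tail_irrational[OF w'])
  define x where "x = 1 - 1 / w 0"
  have x01: "0 < x" "x < 1" using wgt[of 0] by (simp_all add: x_def)
  have w0: "w 0 = 1 / (1 - x)" by (simp add: x_def)
  have xirr: "x \<notin> \<rat>"
  proof
    assume "x \<in> \<rat>"
    then have "1 / (1 - x) \<in> \<rat>" by (intro Rats_divide Rats_diff) auto
    then show False using wirr w0 by simp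
  qed
  have fl: "\<lfloor>w n\<rfloor> = d n - 1" for n
  proof -
    have "0 < 1 / w (Suc n)" "1 / w (Suc n) < 1" using wgt[of "Suc n"] by simp_all
    then show ?thesis using weq[of n] by (simp add: floor_eq_iff)
  qed
  have orb: "bcf_orbit x (Suc n) = w n" for n
  proof (induction n)
    case 0
    have "\<lfloor>x\<rfloor> = 0" using x01 by (simp add: floor_eq_iff)
    then show ?case using w0 by simp
  next
    case (Suc n)
    have "bcf_orbit x (Suc (Suc n)) = 1 / (real_of_int (\<lfloor>w n\<rfloor> + 1) - w n)"
      using Suc by (simp del: bcf_orbit.simps add: bcf_orbit.simps(2))
    also have "\<dots> = 1 / (d n - w n)" using fl[of n] by simp
    also have "d n - w n = 1 / w (Suc n)" using weq[of n] by linarith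
    finally show ?case by simp
  qed
  have dig: "bcf_digit x n = c n" if n1: "n \<ge> 1" for n
  proof -
    obtain k where k: "n = Suc k" using n1 by (cases n) simp_all
    show ?thesis unfolding k bcf_digit_def orb fl d_def by simp
  qed
  have Px: "x \<in> {0<..<1} - \<rat> \<and> (\<forall>n\<ge>1. bcf_digit x n = c n)" using x01 xirr dig by auto
  have uniq: "z = x" if Pz: "z \<in> {0<..<1} - \<rat> \<and> (\<forall>n\<ge>1. bcf_digit z n = c n)" for z
  proof -
    have zs: "z \<in> {0<..<1} - \<rat>" using Pz by blast
    define v where "v n = bcf_orbit z (Suc n)" for n
    have v: "\<forall>n. v n > 1 \<and> v n = d n - 1 / v (Suc n)"
    proof
      fix n
      have "v n > 1" unfolding v_def by (rule orbit_props(3)[OF zs]) simp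
      moreover have "v n = bcf_digit z (Suc n) - 1 / v (Suc n)" unfolding v_def by (rule orbit_props(2)[OF zs])
      moreover have "bcf_digit z (Suc n) = d n" using Pz by (simp add: d_def)
      ultimately show "v n > 1 \<and> v n = d n - 1 / v (Suc n)" by simp
    qed
    have "v 0 = w 0" by (rule tail_unique[OF d2 d3 v w'])
    moreover have "z = bcf_digit z 0 - 1 / v 0" unfolding v_def using orbit_props(2)[OF zs, of 0] by simp
    ultimately show ?thesis using orbit_digit0[OF zs] by (simp add: x_def)
  qed
  have "bcf_value c = x" unfolding bcf_value_def
    by (rule the_equality) (use Px uniq in blast)+
  then show ?thesis using Px by simp
qed

fun Pc :: "(nat \<Rightarrow> int) \<Rightarrow> nat \<Rightarrow> int" where
  "Pc c 0 = 0"
| "Pc c (Suc 0) = 1"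
| "Pc c (Suc (Suc n)) = c n * Pc c (Suc n) - Pc c n"

fun Qc :: "(nat \<Rightarrow> int) \<Rightarrow> nat \<Rightarrow> int" where
  "Qc c 0 = -1"
| "Qc c (Suc 0) = 0"
| "Qc c (Suc (Suc n)) = c n * Qc c (Suc n) - Qc c n"

lemma conv_identity:
  fixes c :: "nat \<Rightarrow> int" and ob :: "nat \<Rightarrow> real"
  assumes onz: "\<forall>n. ob (Suc n) \<noteq> 0" and orec: "\<forall>n. ob n = c n - 1 / ob (Suc n)"
  shows "ob 0 * (Qc c (Suc n) * ob n - Qc c n) = Pc c (Suc n) * ob n - Pc c n"
proof (induction n)
  case 0 then show ?case by simp
next
  case (Suc n)
  have nz: "ob (Suc n) \<noteq> 0" using onz by blast
  have e: "ob n = c n - 1 / ob (Suc n)" using orec by blast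
  have q: "Qc c (Suc (Suc n)) * ob (Suc n) - Qc c (Suc n) = ob (Suc n) * (Qc c (Suc n) * ob n - Qc c n)"
    using nz by (simp add: e field_simps)
  have p: "Pc c (Suc (Suc n)) * ob (Suc n) - Pc c (Suc n) = ob (Suc n) * (Pc c (Suc n) * ob n - Pc c n)"
    using nz by (simp add: e field_simps)
  show ?case unfolding q p using Suc by (metis mult.left_commute)
qed

lemma conv_det: "Pc c n * Qc c (Suc n) - Pc c (Suc n) * Qc c n = 1"
proof (induction n)
  case 0 then show ?case by simp
next
  case (Suc n) then show ?case by (simp add: algebra_simps)
qed

definition Dl :: "(nat \<Rightarrow> int) \<Rightarrow> nat \<Rightarrow> int" where
  "Dl c n = Qc c (Suc n) - Qc c n"

lemma Dl_Suc: "Dl c (Suc n) = Dl c n + (c n - 2) * Qc c (Suc n)"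
  by (simp add: Dl_def algebra_simps)

locale digs =
  fixes c :: "nat \<Rightarrow> int"
  assumes c0: "c 0 = 1" and c2: "\<And>n. n \<ge> 1 \<Longrightarrow> c n \<ge> 2"
begin

lemma Dl_Q_pos: "Dl c n \<ge> 1 \<and> Qc c (Suc n) \<ge> 0"
proof (induction n)
  case 0 then show ?case by (simp add: Dl_def)
next
  case (Suc n)
  have "(c n - 2) * Qc c (Suc n) \<ge> 0"
  proof (cases n)
    case 0 then show ?thesis by simp
  next
    case (Suc k) then have "c n \<ge> 2" using c2 by simp
    then show ?thesis using Suc.IH by simp
  qed
  then have "Dl c (Suc n) \<ge> 1" using Suc.IH Dl_Suc[of c n] by simp
  moreover have "Qc c (Suc (Suc n)) = Qc c (Suc n) + Dl c (Suc n)" by (simp add: Dl_def)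
  ultimately show ?case using Suc.IH by simp
qed

lemma Dl_ge1: "Dl c n \<ge> 1"
  using Dl_Q_pos by blast
lemma Q_nonneg: "n \<ge> 1 \<Longrightarrow> Qc c n \<ge> 0"
  using Dl_Q_pos[of "n - 1"] by simp

lemma Q_ge: "Qc c (Suc n) \<ge> int n"
proof (induction n)
  case 0 then show ?case by simp
next
  case (Suc n)
  have "Qc c (Suc (Suc n)) = Qc c (Suc n) + Dl c (Suc n)" by (simp add: Dl_def)
  then show ?case using Suc Dl_ge1[of "Suc n"] by simp
qed

lemma Dl_step_mono: "Dl c n \<le> Dl c (Suc n)"
proof (cases n)
  case 0 then show ?thesis by (simp add: Dl_def)
next
  case (Suc k)
  then have "c n \<ge> 2" using c2 by simp
  then show ?thesis using Dl_Suc[of c n] Q_nonneg[of "Suc n"] by simp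
qed

lemma Dl_mono: "m \<le> n \<Longrightarrow> Dl c m \<le> Dl c n"
  using lift_Suc_mono_le[of "Dl c", OF Dl_step_mono] by blast

lemma Dl_strict: "n \<ge> 1 \<Longrightarrow> c n \<ge> 3 \<Longrightarrow> Dl c n < Dl c (Suc n)"
proof -
  assume n: "n \<ge> 1" and cn: "c n \<ge> 3"
  have "Qc c (Suc n) \<ge> 1" using Q_ge[of n] n by simp
  then have "(c n - 2) * Qc c (Suc n) \<ge> 1" using mult_mono[of 1 "c n - 2" 1 "Qc c (Suc n)"] cn by simp
  then show ?thesis using Dl_Suc[of c n] by simp
qed

lemma Q_step: "n \<ge> 1 \<Longrightarrow> Qc c (Suc (Suc n)) \<le> c n * Qc c (Suc n)"
  using Q_nonneg[of n] by simp

lemma Q_iter: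
  assumes K: "\<And>i. 1 \<le> i \<Longrightarrow> i \<le> j \<Longrightarrow> c (m + i) \<le> K"
  shows "Qc c (m + 2 + j) \<le> K ^ j * Qc c (m + 2)"
  using K
proof (induction j)
  case 0 then show ?case by simp
next
  case (Suc j)
  have ih: "Qc c (m + 2 + j) \<le> K ^ j * Qc c (m + 2)" using Suc by simp
  have ck: "c (m + Suc j) \<le> K" using Suc.prems[of "Suc j"] by simp
  have c2': "c (m + Suc j) \<ge> 2" using c2 by simp
  have "Qc c (m + 2 + Suc j) = Qc c (Suc (Suc (m + Suc j)))" by simp
  also have "\<dots> \<le> c (m + Suc j) * Qc c (Suc (m + Suc j))" by (rule Q_step) simp
  also have "\<dots> \<le> K * Qc c (Suc (m + Suc j))"
    using ck Q_nonneg[of "Suc (m + Suc j)"] by (intro mult_right_mono) auto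
  also have "Suc (m + Suc j) = m + 2 + j" by simp
  also have "K * Qc c (m + 2 + j) \<le> K * (K ^ j * Qc c (m + 2))"
    using ih ck c2' by (intro mult_left_mono) auto
  finally show ?case by (simp add: algebra_simps)
qed

lemma Q_block:
  assumes two: "\<And>i. 1 \<le> i \<Longrightarrow> i \<le> r \<Longrightarrow> c (m + i) = 2"
  shows "Qc c (m + 2 + r) \<le> (int r + 1) * Qc c (m + 2)"
proof -
  have dc: "Dl c (m + 1 + i) = Dl c (m + 1)" if "i \<le> r" for i
    using that
  proof (induction i)
    case 0 then show ?case by simp
  next
    case (Suc i)
    have "c (m + 1 + i) = 2" using two[of "Suc i"] Suc.prems by simp
    then have "Dl c (Suc (m + 1 + i)) = Dl c (m + 1 + i)" using Dl_Suc[of c "m + 1 + i"] by simp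
    then show ?case using Suc by simp
  qed
  have eq: "Qc c (m + 2 + i) = Qc c (m + 2) + int i * Dl c (m + 1)" if "i \<le> r" for i
    using that
  proof (induction i)
    case 0 then show ?case by simp
  next
    case (Suc i)
    have "Qc c (m + 2 + Suc i) = Qc c (m + 2 + i) + Dl c (m + 2 + i)" by (simp add: Dl_def)
    moreover have "Dl c (m + 2 + i) = Dl c (m + 1)" using dc[of "Suc i"] Suc.prems by simp
    ultimately show ?case using Suc by (simp add: algebra_simps)
  qed
  have "Dl c (m + 1) \<le> Qc c (m + 2)" using Q_nonneg[of "m + 1"] by (simp add: Dl_def)
  then have "int r * Dl c (m + 1) \<le> int r * Qc c (m + 2)" by (intro mult_left_mono) auto
  then show ?thesis using eq[of r] by (simp add: algebra_simps)
qed

end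

lemma orbit_block:
  fixes ob :: "nat \<Rightarrow> real" and c :: "nat \<Rightarrow> int"
  assumes ogt: "\<And>k. k \<ge> m \<Longrightarrow> ob k > 1" and orec: "\<And>k. ob k = c k - 1 / ob (Suc k)"
    and two: "\<And>i. i < r \<Longrightarrow> c (m + i) = 2"
  shows "1 / (ob m - 1) = r + 1 / (ob (m + r) - 1)"
  using two
proof (induction r)
  case 0 then show ?case by simp
next
  case (Suc r)
  have a: "ob (Suc (m + r)) > 1" using ogt by simp
  have "ob (m + r) = 2 - 1 / ob (Suc (m + r))" using orec[of "m + r"] Suc.prems[of r] by simp
  then have "ob (m + r) - 1 = (ob (Suc (m + r)) - 1) / ob (Suc (m + r))" using a by (simp add: field_simps)
  then have "1 / (ob (m + r) - 1) = ob (Suc (m + r)) / (ob (Suc (m + r)) - 1)" by simp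
  also have "\<dots> = 1 + 1 / (ob (Suc (m + r)) - 1)" using a by (simp add: field_simps)
  finally have "1 / (ob (m + r) - 1) = 1 + 1 / (ob (Suc (m + r)) - 1)" .
  then show ?case using Suc by simp
qed

lemma approx:
  fixes c :: "nat \<Rightarrow> int" and ob :: "nat \<Rightarrow> real" and P Q :: int
  assumes onz: "\<forall>n. ob (Suc n) \<noteq> 0" and orec: "\<forall>n. ob n = c n - 1 / ob (Suc n)"
    and W: "ob (Suc N) > 1" and Q2: "Qc c (N + 2) \<ge> 0" and Qp: "Qc c (N + 2) - Qc c (N + 1) > 0"
    and P_def: "P = Pc c (N + 2) - Pc c (N + 1)" and Q_def: "Q = Qc c (N + 2) - Qc c (N + 1)"
  shows "\<bar>ob 0 - P / Q\<bar> \<le> (ob (Suc N) - 1) / Q ^ 2" and "coprime P Q"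
proof -
  define P2 where "P2 = Pc c (N + 2)"
  define P1 where "P1 = Pc c (N + 1)"
  define Q2' where "Q2' = Qc c (N + 2)"
  define Q1 where "Q1 = Qc c (N + 1)"
  define Wv where "Wv = ob (Suc N)"
  define x0 where "x0 = ob 0"
  have e2: "N + 2 = Suc (Suc N)" and e1: "N + 1 = Suc N" by simp_all
  have id: "x0 * (Q2' * Wv - Q1) = P2 * Wv - P1"
    unfolding x0_def Q2'_def Q1_def P2_def P1_def Wv_def e2 e1 by (rule conv_identity[OF onz orec])
  have det: "P1 * Q2' - P2 * Q1 = 1"
    unfolding Q2'_def Q1_def P2_def P1_def e2 e1 by (rule conv_det)
  have PP: "P = P2 - P1" and QQ: "Q = Q2' - Q1" by (simp_all only: P_def Q_def P2_def P1_def Q2'_def Q1_def)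
  have W': "Wv > 1" using W unfolding Wv_def .
  have Q2'': "Q2' \<ge> 0" using Q2 unfolding Q2'_def .
  define D where "D = Q2' * Wv - Q1"
  have DQ: "D = Q + Q2' * (Wv - 1)" by (simp add: D_def QQ algebra_simps)
  have "Q > 0" using Qp Q_def by simp
  then have Qpos: "real_of_int Q > 0" by simp
  have "Q2' * (Wv - 1) \<ge> 0" using Q2'' W' by simp
  then have DgeQ: "D \<ge> Q" using DQ by simp
  then have Dpos: "D > 0" using Qpos by simp
  have x: "x0 = (P2 * Wv - P1) / D" using id Dpos by (simp add: D_def field_simps)
  have "x0 - P / Q = ((P2 * Wv - P1) * Q - P * D) / (D * Q)"
    using Dpos Qpos by (simp add: x field_simps)
  also have "(P2 * Wv - P1) * Q - P * D = (Wv - 1) * (P1 * Q2' - P2 * Q1)"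
    by (simp add: PP QQ D_def algebra_simps)
  also have "\<dots> = Wv - 1" using det by (metis mult.right_neutral of_int_1)
  finally have e: "x0 - P / Q = (Wv - 1) / (D * Q)" .
  have "(Wv - 1) / (D * Q) \<le> (Wv - 1) / (Q * Q)"
    using W' Qpos DgeQ by (intro divide_left_mono mult_right_mono) auto
  then have "\<bar>x0 - P / Q\<bar> \<le> (Wv - 1) / Q ^ 2"
    using e W' Dpos Qpos by (simp add: power2_eq_square)
  then show "\<bar>ob 0 - P / Q\<bar> \<le> (ob (Suc N) - 1) / Q ^ 2"
    by (simp only: x0_def Wv_def)
  have bez: "P * Q1 - P1 * Q = -1"
    using det by (simp add: PP QQ algebra_simps)
  show "coprime P Q"
  proof (rule coprimeI)
    fix g assume "g dvd P" "g dvd Q"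
    then have "g dvd P * Q1 - P1 * Q" by simp
    then have "g dvd -1" using bez by simp
    then show "is_unit g" by simp
  qed
qed

lemma conc_nth_at:
  assumes "j < length (seg k)"
  shows "conc_nth seg ((\<Sum>i<k. length (seg i)) + j) = seg k ! j"
proof -
  let ?n = "(\<Sum>i<k. length (seg i)) + j"
  have sk: "(\<Sum>i\<le>k'. length (seg i)) = (\<Sum>i<k'. length (seg i)) + length (seg k')" for k'
    unfolding lessThan_Suc_atMost[symmetric] by (rule sum.lessThan_Suc)
  have "(LEAST k'. ?n < (\<Sum>i\<le>k'. length (seg i))) = k"
  proof (rule Least_equality)
    show "?n < (\<Sum>i\<le>k. length (seg i))" using assms sk[of k] by simp
  next
    fix k' assume h: "?n < (\<Sum>i\<le>k'. length (seg i))"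
    show "k \<le> k'"
    proof (rule ccontr)
      assume "\<not> k \<le> k'"
      then have "{..k'} \<subseteq> {..<k}" by auto
      then have "(\<Sum>i\<le>k'. length (seg i)) \<le> (\<Sum>i<k. length (seg i))" by (intro sum_mono2) auto
      then show False using h by simp
    qed
  qed
  then show ?thesis unfolding conc_nth_def Let_def by simp
qed

lemma conc_nth_cover:
  fixes seg :: "nat \<Rightarrow> 'a list"
  assumes pos: "\<forall>i. length (seg i) > 0"
  shows "\<exists>k j. j < length (seg k) \<and> n = (\<Sum>i<k. length (seg i)) + j"
proof -
  have sk: "(\<Sum>i\<le>k'. length (seg i)) = (\<Sum>i<k'. length (seg i)) + length (seg k')" for k'
    unfolding lessThan_Suc_atMost[symmetric] by (rule sum.lessThan_Suc)
  have ge: "(\<Sum>i<k'. length (seg i)) \<ge> k'" for k'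
  proof -
    have "(\<Sum>i<k'. length (seg i)) \<ge> (\<Sum>i<k'. (1::nat))" using pos by (intro sum_mono) (simp add: Suc_le_eq)
    then show ?thesis by simp
  qed
  have ex: "\<exists>k. n < (\<Sum>i\<le>k. length (seg i))" using ge[of "Suc n"] by (intro exI[of _ n]) (simp add: lessThan_Suc_atMost)
  define k where "k = (LEAST k. n < (\<Sum>i\<le>k. length (seg i)))"
  have k1: "n < (\<Sum>i\<le>k. length (seg i))" unfolding k_def using ex by (rule LeastI_ex)
  have k2: "(\<Sum>i<k. length (seg i)) \<le> n"
  proof (cases k)
    case 0 then show ?thesis by simp
  next
    case (Suc k')
    have "\<not> n < (\<Sum>i\<le>k'. length (seg i))" using not_less_Least[of k' "\<lambda>k. n < (\<Sum>i\<le>k. length (seg i))"] Suc k_def by simp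
    then show ?thesis using Suc by (simp add: lessThan_Suc_atMost)
  qed
  show ?thesis using k1 k2 sk[of k] by (intro exI[of _ k] exI[of _ "n - (\<Sum>i<k. length (seg i))"]) auto
qed

lemma conc_nth_in:
  fixes seg :: "nat \<Rightarrow> 'a list"
  assumes pos: "\<forall>i. length (seg i) > 0"
  shows "\<exists>k. conc_nth seg n \<in> set (seg k)"
proof -
  obtain k j where "j < length (seg k)" "n = (\<Sum>i<k. length (seg i)) + j" using conc_nth_cover[OF pos] by blast
  then show ?thesis using conc_nth_at[of j seg k] by (metis nth_mem)
qed

lemma cube_bound:
  fixes MB L :: nat
  assumes "MB \<le> L + 2" "L \<ge> 2"
  shows "MB ^ 3 \<le> 2 * (L + 1) ^ 4"
proof -
  define u where "u = L + 1"
  have u: "u \<ge> 3" "MB \<le> u + 1" using assms by (simp_all add: u_def)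
  have "(3 * MB) ^ 3 \<le> (4 * u) ^ 3" using u by (intro power_mono) auto
  then have "27 * MB ^ 3 \<le> 64 * u ^ 3" by (simp add: power_mult_distrib)
  also have "64 * u ^ 3 \<le> 54 * u ^ 4"
  proof -
    have "64 * u ^ 3 \<le> (54 * u) * u ^ 3" using u by (intro mult_right_mono) auto
    also have "\<dots> = 54 * u ^ 4"
    proof -
      have "u ^ 4 = u * u ^ 3" by (simp add: eval_nat_numeral)
      then show ?thesis by simp
    qed
    finally show ?thesis .
  qed
  finally show ?thesis unfolding u_def by simp
qed

lemma log_bound:
  fixes MB L :: nat
  assumes "MB \<le> L + 2" "L \<ge> 2" "MB \<ge> 1"
  shows "ln (2 * real MB) / 2 + ln (real MB) \<le> 2 * ln (sqrt 2 * (real L + 1))"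
proof -
  have c: "real MB ^ 3 \<le> 2 * (real L + 1) ^ 4"
    using cube_bound[OF assms(1,2)] by (metis (mono_tags) of_nat_1 of_nat_add of_nat_le_iff of_nat_mult of_nat_numeral of_nat_power)
  have mb: "real MB > 0" using assms by simp
  have "ln (real MB ^ 3) \<le> ln (2 * (real L + 1) ^ 4)" using c mb by simp
  then have "3 * ln (real MB) \<le> ln 2 + 4 * ln (real L + 1)" using mb by (simp add: ln_mult ln_realpow)
  moreover have "ln (2 * real MB) = ln 2 + ln (real MB)" using mb by (simp add: ln_mult)
  moreover have "ln (sqrt 2 * (real L + 1)) = ln 2 / 2 + ln (real L + 1)" by (simp add: ln_mult ln_sqrt)
  moreover have "ln (2::real) > 0" by simp
  ultimately show ?thesis by linarith
qed

lemma final_ineq: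
  fixes A K lam M Qv :: real and n :: nat
  assumes A: "A > 0" and lam: "lam > 0" and Mpos: "M \<ge> 0" and Qv: "Qv \<ge> 1"
    and lnQ: "ln Qv \<le> M * K + lam * M" and ineq: "A * K + A * lam \<le> lam / 2"
    and big: "lam * M > 2 * ln 2" and n: "n = nat \<lfloor>exp (lam * M)\<rfloor>"
  shows "Qv powr A < real n"
proof -
  have "A * ln Qv \<le> A * (M * K + lam * M)" using A lnQ by simp
  also have "\<dots> = M * (A * K + A * lam)" by (simp add: algebra_simps)
  also have "\<dots> \<le> M * (lam / 2)" using Mpos ineq by (intro mult_left_mono) auto
  finally have a: "A * ln Qv \<le> lam * M / 2" by (simp add: mult.commute)
  have "ln (2::real) > 0" by simp
  have "Qv powr A = exp (A * ln Qv)" using Qv by (simp add: powr_def mult.commute)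
  also have "\<dots> \<le> exp (lam * M / 2)" using a by simp
  also have "\<dots> < exp (lam * M - ln 2)"
  proof -
    have "lam * M / 2 < lam * M - ln 2" using big by linarith
    then show ?thesis by simp
  qed
  also have "\<dots> = exp (lam * M) / 2" by (simp add: exp_diff)
  also have "\<dots> \<le> real n"
  proof -
    have "exp (lam * M) \<ge> 2"
    proof -
      have "exp (lam * M) \<ge> exp (ln 2)" proof -
        have "ln 2 < lam * M" using big \<open>ln (2::real) > 0\<close> by linarith
        then have "exp (ln 2) < exp (lam * M)" by (rule exp_less_mono)
        then show ?thesis by simp
      qed
      then show ?thesis by simp
    qed
    moreover have "real n \<ge> exp (lam * M) - 1"
    proof -
      have f0: "\<lfloor>exp (lam * M)\<rfloor> \<ge> 0" by simp
      have "exp (lam * M) < of_int (\<lfloor>exp (lam * M)\<rfloor> + 1)" using floor_correct[of "exp (lam * M)"] by blast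
      moreover have "real (nat \<lfloor>exp (lam * M)\<rfloor>) = of_int \<lfloor>exp (lam * M)\<rfloor>" using f0 by simp
      ultimately show ?thesis using n by simp
    qed
    ultimately show ?thesis by simp
  qed
  finally show ?thesis .
qed

theorem lemma3p1:
  fixes B :: "nat set" and t p :: nat and W :: "nat list set"
    and m :: "nat \<Rightarrow> nat" and M :: "nat \<Rightarrow> nat"
    and lambda alpha y :: real and L :: nat
  assumes B_fin: "finite B" and B_ge2: "\<forall>b\<in>B. b \<ge> 2" and two_B: "2 \<in> B"
    and t_B: "t \<in> B" and t_ne: "t \<noteq> 2"
    and p_ge: "p \<ge> 2"
    and W_fin: "finite W" and W_ne: "W \<noteq> {}"
    and W_words: "\<forall>w\<in>W. length w = p \<and> set w \<subseteq> B \<and> last w \<noteq> 2"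
    and m_pos: "\<forall>i. m i > 0"
    and M_def: "\<forall>k. M k = p * (\<Sum>i\<le>k. m i)"
    and M_growth: "\<forall>k\<ge>1. real (M k) \<ge> real (\<Sum>i<k. M i) \<and> real (M k) \<ge> real (M (k - 1)) / 2"
    and lambda_pos: "lambda > 0"
    and L_def: "L = max (Max B - 2) p"
    and alpha_gt: "alpha > 2"
    and alpha_ineq: "2 * (alpha - 2) * ln (sqrt 2 * (real L + 1)) + (alpha - 2) * lambda \<le> lambda / 2"
    and y_irr: "y \<in> {0<..<1} - \<rat>"
    and y_words: "\<exists>w. (\<forall>i. w i \<in> W) \<and> (\<forall>n\<ge>1. bcf_digit y n = int (conc_nth w (n - 1)))"
  shows "bcf_value (\<lambda>n. int (conc_nth
            (\<lambda>k. map (\<lambda>j. nat (bcf_digit y j))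
                     [(if k = 0 then 0 else M (k - 1)) + 1 ..< M k + 1]
                  @ replicate (nat \<lfloor>exp (lambda * real (M k))\<rfloor>) 2 @ [t])
            (n - 1)))
         \<in> G alpha \<inter> F B"
proof -
  define seg where "seg = (\<lambda>k. map (\<lambda>j. nat (bcf_digit y j))
                     [(if k = 0 then 0 else M (k - 1)) + 1 ..< M k + 1]
                  @ replicate (nat \<lfloor>exp (lambda * real (M k))\<rfloor>) 2 @ [t])"
  define f where "f = (\<lambda>n. int (conc_nth seg (n - 1)))"
  define x where "x = bcf_value f"
  have goal_eq: "bcf_value (\<lambda>n. int (conc_nth
            (\<lambda>k. map (\<lambda>j. nat (bcf_digit y j))
                     [(if k = 0 then 0 else M (k - 1)) + 1 ..< M k + 1]
                  @ replicate (nat \<lfloor>exp (lambda * real (M k))\<rfloor>) 2 @ [t])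
            (n - 1))) = x"
    unfolding x_def f_def seg_def ..
  define MB where "MB = Max B"
  have BMB: "b \<le> MB" if "b \<in> B" for b using B_fin that unfolding MB_def by simp
  have MB2: "MB \<ge> 2" using BMB[OF two_B] .
  have t3: "t \<ge> 3"
  proof -
    have "t \<ge> 2" using B_ge2 t_B by blast
    then show ?thesis using t_ne by simp
  qed
  have tMB: "t \<le> MB" using BMB[OF t_B] .
  have L2: "L \<ge> 2" using p_ge L_def by simp
  have MBL: "MB \<le> L + 2" using L_def MB_def by simp
  obtain w where wW: "\<forall>i. w i \<in> W" and ydig: "\<forall>n\<ge>1. bcf_digit y n = int (conc_nth w (n - 1))"
    using y_words by blast
  have wlen: "\<forall>i. length (w i) > 0"
  proof
    fix i
    have "length (w i) = p" using wW W_words by blast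
    then show "length (w i) > 0" using p_ge by simp
  qed
  have yB: "nat (bcf_digit y n) \<in> B" if n1: "n \<ge> 1" for n
  proof -
    obtain k where "conc_nth w (n - 1) \<in> set (w k)" using conc_nth_in[OF wlen] by blast
    moreover have "set (w k) \<subseteq> B" using wW W_words by blast
    ultimately show ?thesis using ydig n1 by auto
  qed
  define a where "a k = (if k = 0 then 0 else M (k - 1))" for k
  define nn where "nn k = nat \<lfloor>exp (lambda * real (M k))\<rfloor>" for k
  have seg_eq: "seg k = map (\<lambda>j. nat (bcf_digit y j)) [a k + 1 ..< M k + 1] @ replicate (nn k) 2 @ [t]" for k
    by (simp add: seg_def a_def nn_def)
  have Mmono: "M k \<le> M (Suc k)" for k using M_def by simp
  have Mge: "M k \<ge> 2 * (k + 1)" for k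
  proof -
    have "(\<Sum>i\<le>k. m i) \<ge> (\<Sum>i\<le>k. (1::nat))" using m_pos by (intro sum_mono) (simp add: Suc_le_eq)
    then have "(\<Sum>i\<le>k. m i) \<ge> k + 1" by simp
    then show ?thesis using M_def p_ge by (metis mult_le_mono)
  qed
  have aM: "a k \<le> M k" for k
    by (cases k) (auto simp: a_def Mmono)
  have aSuc: "a (Suc k) = M k" for k by (simp add: a_def)
  define Dk where "Dk k = M k - a k" for k
  have len: "length (seg k) = Dk k + nn k + 1" for k
    using aM[of k] by (simp add: seg_eq Dk_def) arith
  have lenpos: "\<forall>k. length (seg k) > 0" using len by simp
  define S where "S k = (\<Sum>i<k. length (seg i))" for k
  have S_Suc: "S (Suc k) = S k + Dk k + nn k + 1" for k by (simp add: S_def len)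
  have S_ge: "S k \<ge> k" for k
    by (induction k) (simp_all add: S_def len)
  have lenU: "length (map (\<lambda>j. nat (bcf_digit y j)) [a k + 1 ..< M k + 1]) = Dk k" for k
    by (simp add: Dk_def) arith
  have seg_y: "seg k ! j = nat (bcf_digit y (a k + 1 + j))" if j: "j < Dk k" for k j
  proof -
    have "seg k ! j = map (\<lambda>j. nat (bcf_digit y j)) [a k + 1 ..< M k + 1] ! j"
      unfolding seg_eq using j lenU[of k] by (simp only: nth_append) simp
    also have "\<dots> = nat (bcf_digit y ([a k + 1 ..< M k + 1] ! j))"
    proof (rule nth_map)
      show "j < length [a k + 1 ..< M k + 1]" using j lenU[of k] by simp
    qed
    also have "[a k + 1 ..< M k + 1] ! j = a k + 1 + j"
    proof (rule nth_upt)
      show "a k + 1 + j < M k + 1" using j aM[of k] unfolding Dk_def by arith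
    qed
    finally show ?thesis .
  qed
  have seg_2: "seg k ! j = 2" if j: "Dk k \<le> j" "j < Dk k + nn k" for k j
  proof -
    have "seg k ! j = (replicate (nn k) 2 @ [t]) ! (j - Dk k)"
      unfolding seg_eq using j lenU[of k] by (simp only: nth_append) simp
    also have "\<dots> = 2" using j by (simp add: nth_append) arith
    finally show ?thesis .
  qed
  have seg_t: "seg k ! (Dk k + nn k) = t" for k
  proof -
    have "seg k ! (Dk k + nn k) = (replicate (nn k) 2 @ [t]) ! (Dk k + nn k - Dk k)"
      unfolding seg_eq using lenU[of k] by (simp only: nth_append) simp
    also have "\<dots> = t" by (simp add: nth_append)
    finally show ?thesis .
  qed
  have setseg: "set (seg k) \<subseteq> B" for k
  proof -
    have "set (map (\<lambda>j. nat (bcf_digit y j)) [a k + 1 ..< M k + 1]) \<subseteq> B" using yB by auto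
    moreover have "set (replicate (nn k) (2::nat)) \<subseteq> B" using two_B by (simp add: set_replicate_conv_if)
    ultimately show ?thesis using t_B unfolding seg_eq set_append by simp
  qed
  have fpos: "f (S k + j + 1) = int (seg k ! j)" if "j < length (seg k)" for k j
    using conc_nth_at[of j seg k, OF that] by (simp add: f_def S_def)
  have fB: "nat (f n) \<in> B \<and> f n = int (nat (f n))" if n1: "n \<ge> 1" for n
  proof -
    obtain k where "conc_nth seg (n - 1) \<in> set (seg k)" using conc_nth_in[OF lenpos] by blast
    then have "conc_nth seg (n - 1) \<in> B" using setseg by blast
    then show ?thesis by (simp add: f_def)
  qed
  have f2: "f n \<ge> 2" if n1: "n \<ge> 1" for n
  proof -
    have "nat (f n) \<ge> 2" using fB[OF n1] B_ge2 by blast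
    then show ?thesis by linarith
  qed
  have fMB: "f n \<le> MB" if n1: "n \<ge> 1" for n
  proof -
    have "nat (f n) \<le> MB" using fB[OF n1] BMB by blast
    then have "int (nat (f n)) \<le> int MB" by (simp only: of_nat_le_iff)
    then show ?thesis using fB[OF n1] by linarith
  qed
  have ft: "f (S (Suc k)) = int t" for k
  proof -
    have "f (S k + (Dk k + nn k) + 1) = int (seg k ! (Dk k + nn k))" by (rule fpos) (simp add: len)
    then show ?thesis using seg_t S_Suc by (simp add: add.assoc)
  qed
  have c2: "\<forall>n\<ge>1. f n \<ge> 2" using f2 by blast
  have c3: "\<forall>N. \<exists>m\<ge>N. f m \<ge> 3"
  proof
    fix N
    have "S (Suc N) \<ge> N" using S_ge[of "Suc N"] by simp
    moreover have "f (S (Suc N)) \<ge> 3" using ft t3 by simp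
    ultimately show "\<exists>m\<ge>N. f m \<ge> 3" by blast
  qed
  have xprop: "x \<in> {0<..<1} - \<rat> \<and> (\<forall>n\<ge>1. bcf_digit x n = f n)"
    unfolding x_def by (rule bcf_value_prop[OF c2 c3])
  then have xs: "x \<in> {0<..<1} - \<rat>" and xd: "\<And>n. n \<ge> 1 \<Longrightarrow> bcf_digit x n = f n" by auto
  have FB: "x \<in> F B"
  proof -
    have "bcf_digit x n \<in> int ` B" if n1: "n \<ge> 1" for n
    proof -
      have "bcf_digit x n = int (nat (f n))" using xd[OF n1] fB[OF n1] by simp
      then show ?thesis using fB[OF n1] by blast
    qed
    then show ?thesis unfolding F_def using xs by blast
  qed
  define cc where "cc n = (if n = 0 then 1 else f n)" for n
  have cc0: "cc 0 = 1" by (simp add: cc_def)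
  have cc2: "cc n \<ge> 2" if "n \<ge> 1" for n using f2[OF that] that by (simp add: cc_def)
  interpret digs cc by unfold_locales (use cc0 cc2 in auto)
  have ccMB: "cc n \<le> int MB" if "n \<ge> 1" for n using fMB[OF that] that by (simp add: cc_def)
  have cc_t: "cc (S (Suc k)) = int t" for k using ft[of k] S_Suc[of k] by (simp add: cc_def)
  have cc_2: "cc (S k + Dk k + 1 + i) = 2" if i: "i < nn k" for k i
  proof -
    have "f (S k + (Dk k + i) + 1) = int (seg k ! (Dk k + i))" by (rule fpos) (use i in \<open>simp add: len\<close>)
    moreover have "seg k ! (Dk k + i) = 2" by (rule seg_2) (use i in auto)
    ultimately show ?thesis by (simp add: cc_def add.assoc)
  qed
  define ob where "ob n = bcf_orbit x n" for n
  have ob0: "ob 0 = x" by (simp add: ob_def)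
  have ogt: "ob (Suc n) > 1" for n unfolding ob_def by (rule orbit_props(3)[OF xs]) simp
  have onz: "\<forall>n. ob (Suc n) \<noteq> 0"
  proof
    fix n show "ob (Suc n) \<noteq> 0" using ogt[of n] by simp
  qed
  have orec: "\<forall>n. ob n = cc n - 1 / ob (Suc n)"
  proof
    fix n
    have "ob n = bcf_digit x n - 1 / ob (Suc n)" unfolding ob_def by (rule orbit_props(2)[OF xs])
    moreover have "bcf_digit x n = cc n"
      using orbit_digit0[OF xs] xd by (cases "n = 0") (simp_all add: cc_def)
    ultimately show "ob n = cc n - 1 / ob (Suc n)" by simp
  qed
  define Nk where "Nk k = S k + Dk k" for k
  define Pk where "Pk k = Pc cc (Nk k + 2) - Pc cc (Nk k + 1)" for k
  define Qk where "Qk k = Qc cc (Nk k + 2) - Qc cc (Nk k + 1)" for k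
  have QkDl: "Qk k = Dl cc (Nk k + 1)" for k by (simp add: Qk_def Dl_def)
  have Qk1: "Qk k \<ge> 1" for k using Dl_ge1 QkDl by simp
  have appr: "\<bar>x - Pk k / Qk k\<bar> \<le> (ob (Suc (Nk k)) - 1) / Qk k ^ 2 \<and> coprime (Pk k) (Qk k)" for k
  proof -
    have Q2: "Qc cc (Nk k + 2) \<ge> 0" by (rule Q_nonneg) simp
    have Qp: "Qc cc (Nk k + 2) - Qc cc (Nk k + 1) > 0" using Qk1[of k] by (simp add: Qk_def)
    from approx[OF onz orec ogt[of "Nk k"] Q2 Qp Pk_def Qk_def] ob0 show ?thesis by simp
  qed
  have blk: "ob (Suc (Nk k)) - 1 < 1 / nn k" if nnpos: "nn k > 0" for k
  proof -
    have "1 / (ob (Suc (Nk k)) - 1) = real (nn k) + 1 / (ob (Suc (Nk k) + nn k) - 1)"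
    proof (rule orbit_block)
      fix j assume "j \<ge> Suc (Nk k)"
      then obtain j' where "j = Suc j'" by (cases j) auto
      then show "ob j > 1" using ogt by simp
    next
      show "\<And>j. ob j = cc j - 1 / ob (Suc j)" using orec by blast
    next
      show "\<And>i. i < nn k \<Longrightarrow> cc (Suc (Nk k) + i) = 2" using cc_2 by (simp add: Nk_def)
    qed
    moreover have "1 / (ob (Suc (Nk k) + nn k) - 1) > 0" using ogt[of "Nk k + nn k"] by simp
    ultimately have "1 / (ob (Suc (Nk k)) - 1) > real (nn k)" by simp
    moreover have "ob (Suc (Nk k)) - 1 > 0" using ogt[of "Nk k"] by simp
    ultimately show ?thesis using nnpos by (simp add: field_simps)
  qed
  have Dk_a: "Dk k + a k = M k" for k using aM[of k] by (simp add: Dk_def)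
  have SucS: "S (Suc k) = Nk k + nn k + 1" for k by (simp add: S_Suc Nk_def)
  have nn_le: "real (nn k) \<le> exp (lambda * real (M k))" for k
  proof -
    have "\<lfloor>exp (lambda * real (M k))\<rfloor> \<ge> 0" by simp
    then have "real (nn k) = of_int \<lfloor>exp (lambda * real (M k))\<rfloor>" by (simp add: nn_def)
    also have "\<dots> \<le> exp (lambda * real (M k))" by (rule of_int_floor_le)
    finally show ?thesis .
  qed
  have iterQ: "Qc cc (Nk k + 2) \<le> int MB ^ Dk k * Qc cc (S k + 2)" for k
  proof -
    have "Qc cc (S k + 2 + Dk k) \<le> int MB ^ Dk k * Qc cc (S k + 2)"
      by (rule Q_iter) (rule ccMB, simp)
    then show ?thesis by (simp add: Nk_def add.commute add.left_commute)
  qed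
  have Qs: "real_of_int (Qc cc (S k + 2)) \<le> (2 * real t) ^ k * real MB ^ a k * exp (lambda * (\<Sum>i<k. real (M i)))" for k
  proof (induction k)
    case 0
    have "Qc cc (Suc (Suc 0)) = 1" by simp
    moreover have "S 0 + 2 = Suc (Suc 0)" by (simp add: S_def)
    ultimately show ?case by (simp add: a_def)
  next
    case (Suc k)
    have h1: "Qc cc (S (Suc k) + 2) \<le> int t * Qc cc (S (Suc k) + 1)"
    proof -
      have "Qc cc (Suc (Suc (S (Suc k)))) \<le> cc (S (Suc k)) * Qc cc (Suc (S (Suc k)))"
        by (rule Q_step) (simp add: S_Suc)
      then show ?thesis using cc_t[of k] by simp
    qed
    have h2: "Qc cc (S (Suc k) + 1) \<le> (int (nn k) + 1) * Qc cc (Nk k + 2)"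
    proof -
      have "Qc cc (Nk k + 2 + nn k) \<le> (int (nn k) + 1) * Qc cc (Nk k + 2)"
      proof (rule Q_block)
        fix i assume i: "1 \<le> i" "i \<le> nn k"
        have "cc (S k + Dk k + 1 + (i - 1)) = 2" by (rule cc_2) (use i in arith)
        moreover have "S k + Dk k + 1 + (i - 1) = Nk k + i" using i by (simp add: Nk_def)
        ultimately show "cc (Nk k + i) = 2" by simp
      qed
      moreover have "S (Suc k) + 1 = Nk k + 2 + nn k" by (simp add: SucS)
      ultimately show ?thesis by simp
    qed
    have q0: "Qc cc (S k + 2) \<ge> 0" by (rule Q_nonneg) simp
    have qN: "Qc cc (Nk k + 2) \<ge> 0" by (rule Q_nonneg) simp
    have qS1: "Qc cc (S (Suc k) + 1) \<ge> 0" by (rule Q_nonneg) simp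
    define qa where "qa = Qc cc (S (Suc k) + 2)"
    define qb where "qb = Qc cc (S k + 2)"
    have qb0: "qb \<ge> 0" using q0 by (simp add: qb_def)
    have "qa \<le> int t * ((int (nn k) + 1) * (int MB ^ Dk k * qb))"
    proof -
      have "int t * Qc cc (S (Suc k) + 1) \<le> int t * ((int (nn k) + 1) * Qc cc (Nk k + 2))"
        using h2 by (intro mult_left_mono) auto
      also have "\<dots> \<le> int t * ((int (nn k) + 1) * (int MB ^ Dk k * Qc cc (S k + 2)))"
        using iterQ[of k] by (intro mult_left_mono) auto
      finally show ?thesis using h1 unfolding qa_def qb_def by simp
    qed
    then have "real_of_int qa \<le> real_of_int (int t * ((int (nn k) + 1) * (int MB ^ Dk k * qb)))"
      by (simp only: of_int_le_iff)
    then have r1: "real_of_int qa \<le> real t * ((real (nn k) + 1) * (real MB ^ Dk k * real_of_int qb))"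
      by simp
    define R where "R = (2 * real t) ^ k * real MB ^ a k * exp (lambda * (\<Sum>i<k. real (M i)))"
    define e where "e = exp (lambda * real (M k))"
    have e1: "e \<ge> 1" unfolding e_def using lambda_pos by simp
    have "real (nn k) \<le> e" using nn_le[of k] by (simp add: e_def)
    then have nn2: "real (nn k) + 1 \<le> 2 * e" using e1 by linarith
    have IH': "real_of_int qb \<le> R" using Suc.IH unfolding R_def qb_def .
    have qb0': "real_of_int qb \<ge> 0" using qb0 by simp
    have "real MB ^ Dk k * real_of_int qb \<le> real MB ^ Dk k * R"
      using IH' by (intro mult_left_mono) auto
    moreover have "real MB ^ Dk k * real_of_int qb \<ge> 0" using qb0' by simp
    ultimately have "(real (nn k) + 1) * (real MB ^ Dk k * real_of_int qb) \<le> (2 * e) * (real MB ^ Dk k * R)"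
      using nn2 e1 by (intro mult_mono[of "real (nn k) + 1" "2 * e"]) auto
    then have "real t * ((real (nn k) + 1) * (real MB ^ Dk k * real_of_int qb))
        \<le> real t * ((2 * e) * (real MB ^ Dk k * R))"
      by (intro mult_left_mono) auto
    also have "\<dots> = (2 * real t) ^ Suc k * real MB ^ a (Suc k) * exp (lambda * (\<Sum>i<Suc k. real (M i)))"
    proof -
      have "real MB ^ a (Suc k) = real MB ^ Dk k * real MB ^ a k"
        using Dk_a[of k] aSuc[of k] by (metis power_add)
      moreover have "exp (lambda * (\<Sum>i<Suc k. real (M i))) = exp (lambda * (\<Sum>i<k. real (M i))) * e"
        by (simp add: e_def distrib_left exp_add)
      ultimately show ?thesis unfolding R_def by (simp add: algebra_simps)
    qed
    finally show ?case using r1 unfolding qa_def by linarith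
  qed
  define K where "K = 2 * ln (sqrt 2 * (real L + 1))"
  have MBpos: "real MB > 0" using MB2 by simp
  have lnQ: "ln (real_of_int (Qk k)) \<le> real (M k) * K + lambda * real (M k)" for k
  proof -
    define qb where "qb = Qc cc (S k + 2)"
    define qN where "qN = Qc cc (Nk k + 2)"
    have qb0: "qb \<ge> 0" unfolding qb_def by (rule Q_nonneg) simp
    have "Qc cc (Nk k + 1) \<ge> 0" by (rule Q_nonneg) simp
    then have "Qk k \<le> qN" by (simp add: Qk_def qN_def)
    also have "qN \<le> int MB ^ Dk k * qb" using iterQ[of k] by (simp add: qN_def qb_def)
    finally have "real_of_int (Qk k) \<le> real_of_int (int MB ^ Dk k * qb)" by (simp only: of_int_le_iff)
    then have a1: "real_of_int (Qk k) \<le> real MB ^ Dk k * real_of_int qb" by simp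
    have "real_of_int qb \<le> (2 * real t) ^ k * real MB ^ a k * exp (lambda * (\<Sum>i<k. real (M i)))"
      using Qs[of k] by (simp add: qb_def)
    also have "\<dots> \<le> (2 * real t) ^ k * real MB ^ a k * exp (lambda * real (M k))"
    proof -
      have "(\<Sum>i<k. real (M i)) \<le> real (M k)"
      proof (cases "k = 0")
        case True then show ?thesis by simp
      next
        case False
        then have "real (\<Sum>i<k. M i) \<le> real (M k)" using M_growth by simp
        then show ?thesis by simp
      qed
      then have "exp (lambda * (\<Sum>i<k. real (M i))) \<le> exp (lambda * real (M k))"
        using lambda_pos by simp
      then show ?thesis by (intro mult_left_mono) auto
    qed
    finally have "real MB ^ Dk k * real_of_int qb \<le> real MB ^ Dk k * ((2 * real t) ^ k * real MB ^ a k * exp (lambda * real (M k)))"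
      by (intro mult_left_mono) auto
    also have "\<dots> = (2 * real t) ^ k * real MB ^ M k * exp (lambda * real (M k))"
      using Dk_a[of k] by (simp add: power_add[symmetric] algebra_simps)
    finally have a2: "real_of_int (Qk k) \<le> (2 * real t) ^ k * real MB ^ M k * exp (lambda * real (M k))"
      using a1 by linarith
    have Qkp: "real_of_int (Qk k) > 0" using Qk1[of k] by simp
    have "ln (real_of_int (Qk k)) \<le> ln ((2 * real t) ^ k * real MB ^ M k * exp (lambda * real (M k)))"
      using a2 Qkp by simp
    also have "\<dots> = real k * ln (2 * real t) + real (M k) * ln (real MB) + lambda * real (M k)"
      using t3 MBpos by (simp add: ln_mult ln_realpow distrib_left)
    also have "real k * ln (2 * real t) \<le> real (M k) * (ln (2 * real MB) / 2)"
    proof -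
      have "ln (2 * real t) \<le> ln (2 * real MB)" using tMB t3 by simp
      moreover have "ln (2 * real MB) \<ge> 0" using MB2 by simp
      moreover have "real k \<le> real (M k) / 2" using Mge[of k] by simp
      ultimately have "real k * ln (2 * real t) \<le> (real (M k) / 2) * ln (2 * real MB)"
        using t3 by (intro mult_mono) auto
      then show ?thesis by simp
    qed
    finally have "ln (real_of_int (Qk k)) \<le> real (M k) * (ln (2 * real MB) / 2 + ln (real MB)) + lambda * real (M k)"
      by (simp add: algebra_simps)
    also have "real (M k) * (ln (2 * real MB) / 2 + ln (real MB)) \<le> real (M k) * K"
      unfolding K_def using log_bound[OF MBL L2] MB2 by (intro mult_left_mono) auto
    finally show ?thesis by simp
  qed
  obtain k0 :: nat where k0: "ln 2 / lambda < real k0" using reals_Archimedean2 by blast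
  have good: "\<bar>x - real_of_int (Pk k) / real_of_int (Qk k)\<bar> < real_of_int (Qk k) powr (- alpha)" if kk: "k \<ge> k0" for k
  proof -
    have big: "lambda * real (M k) > 2 * ln 2"
    proof -
      have "ln 2 < lambda * real k0" using k0 lambda_pos by (simp add: field_simps)
      also have "lambda * real k0 \<le> lambda * real k" using kk lambda_pos by simp
      finally have "ln 2 < lambda * real k" .
      moreover have "real (M k) \<ge> 2 * real k + 2" using Mge[of k] by simp
      then have h: "lambda * (2 * real k + 2) \<le> lambda * real (M k)" using lambda_pos by (intro mult_left_mono) auto
      have "lambda * (2 * real k + 2) = 2 * (lambda * real k) + 2 * lambda" by (simp add: algebra_simps)
      then show ?thesis using h lambda_pos \<open>ln 2 < lambda * real k\<close> by linarith
    qed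
    have Qkp: "real_of_int (Qk k) \<ge> 1" using Qk1[of k] by simp
    have pw: "real_of_int (Qk k) powr (alpha - 2) < real (nn k)"
    proof (rule final_ineq)
      show "alpha - 2 > 0" using alpha_gt by simp
      show "lambda > 0" by (rule lambda_pos)
      show "real (M k) \<ge> 0" by simp
      show "real_of_int (Qk k) \<ge> 1" by (rule Qkp)
      show "ln (real_of_int (Qk k)) \<le> real (M k) * K + lambda * real (M k)" by (rule lnQ)
      show "(alpha - 2) * K + (alpha - 2) * lambda \<le> lambda / 2" 
      proof -
        have "(alpha - 2) * K = 2 * (alpha - 2) * ln (sqrt 2 * (real L + 1))" by (simp add: K_def algebra_simps)
        then show ?thesis using alpha_ineq by linarith
      qed
      show "lambda * real (M k) > 2 * ln 2" by (rule big)
      show "nn k = nat \<lfloor>exp (lambda * real (M k))\<rfloor>" by (simp add: nn_def)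
    qed
    have pwpos: "real_of_int (Qk k) powr (alpha - 2) > 0" using Qkp by simp
    then have "real (nn k) > 0" using pw by linarith
    then have nnpos: "nn k > 0" by simp
    have "\<bar>x - real_of_int (Pk k) / real_of_int (Qk k)\<bar> \<le> (ob (Suc (Nk k)) - 1) / real_of_int (Qk k) ^ 2"
      using appr[of k] by simp
    also have "\<dots> < (1 / real (nn k)) / real_of_int (Qk k) ^ 2"
      using blk[OF nnpos] Qkp by (intro divide_strict_right_mono) auto
    also have "\<dots> < (1 / real_of_int (Qk k) powr (alpha - 2)) / real_of_int (Qk k) ^ 2"
    proof -
      have "0 < real (nn k) * real_of_int (Qk k) powr (alpha - 2)" using pwpos nnpos by simp
      from divide_strict_left_mono[OF pw _ this]
      have "1 / real (nn k) < 1 / real_of_int (Qk k) powr (alpha - 2)" by simp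
      then show ?thesis using Qkp by (intro divide_strict_right_mono) auto
    qed
    also have "\<dots> = real_of_int (Qk k) powr (- alpha)"
    proof -
      have "real_of_int (Qk k) powr alpha = real_of_int (Qk k) powr (alpha - 2) * real_of_int (Qk k) powr 2"
        by (simp add: powr_add[symmetric])
      also have "real_of_int (Qk k) powr 2 = real_of_int (Qk k) ^ 2" using Qkp by (simp add: powr_numeral)
      finally show ?thesis using Qkp by (simp add: powr_minus divide_inverse)
    qed
    finally show ?thesis .
  qed
  have smono: "Qk k < Qk (Suc k)" for k
  proof -
    have "Qk k = Dl cc (Nk k + 1)" by (rule QkDl)
    also have "\<dots> \<le> Dl cc (S (Suc k))" by (rule Dl_mono) (simp add: SucS)
    also have "\<dots> < Dl cc (Suc (S (Suc k)))"
      by (rule Dl_strict) (use cc_t[of k] t3 in \<open>simp_all add: S_Suc\<close>)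
    also have "\<dots> \<le> Dl cc (Nk (Suc k) + 1)" by (rule Dl_mono) (simp add: Nk_def)
    also have "\<dots> = Qk (Suc k)" by (rule QkDl[symmetric])
    finally show ?thesis .
  qed
  have sm: "strict_mono Qk" unfolding strict_mono_Suc_iff using smono by blast
  define gg where "gg k = (Pk k, nat (Qk k))" for k
  define Aset where "Aset = {(p::int, q::nat). q > 0 \<and> coprime p (int q) \<and>
       \<bar>x - real_of_int p / real q\<bar> < real q powr (- alpha)}"
  have sub: "gg ` {k0..} \<subseteq> Aset"
  proof
    fix z assume "z \<in> gg ` {k0..}"
    then obtain k where k: "k \<ge> k0" "z = gg k" by auto
    have q: "int (nat (Qk k)) = Qk k" using Qk1[of k] by simp
    have rq: "real (nat (Qk k)) = real_of_int (Qk k)" using Qk1[of k] by simp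
    have "nat (Qk k) > 0" using Qk1[of k] by simp
    moreover have "coprime (Pk k) (int (nat (Qk k)))" using appr[of k] q by simp
    moreover have "\<bar>x - real_of_int (Pk k) / real (nat (Qk k))\<bar> < real (nat (Qk k)) powr (- alpha)"
      using good[OF k(1)] rq by simp
    ultimately show "z \<in> Aset" unfolding Aset_def k(2) gg_def by simp
  qed
  have injg: "inj_on gg {k0..}"
  proof (rule inj_onI)
    fix k1 k2 assume "k1 \<in> {k0..}" "k2 \<in> {k0..}" "gg k1 = gg k2"
    then have "nat (Qk k1) = nat (Qk k2)" by (simp add: gg_def)
    then have "Qk k1 = Qk k2" using Qk1[of k1] Qk1[of k2] by simp
    then show "k1 = k2" using sm by (simp add: strict_mono_eq)
  qed
  have "infinite (gg ` {k0..})" using injg infinite_Ici[of k0] finite_imageD by blast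
  then have infA: "infinite Aset" using sub finite_subset by blast
  have "ereal alpha \<in> {ereal mu | mu. infinite {(p::int, q::nat). q > 0 \<and> coprime p (int q) \<and>
       \<bar>x - real_of_int p / real q\<bar> < real q powr (- mu)}}"
    using infA unfolding Aset_def by blast
  then have "irr_exp x \<ge> ereal alpha" unfolding irr_exp_def by (rule Sup_upper)
  then have GA: "x \<in> G alpha" unfolding G_def using xs by simp
  show ?thesis using GA FB goal_eq by simp
qed

end
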